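(* Let $A=\mathbb{Z}$ and let $g\in G_a$ be covered by $\widehat g\in\widehat G_a$. Suppose $g$ has a periodic point $x$ of period $q$. Then: (1) $\widehat{\mathrm{rot}}_{x,\alpha}(\widehat g)$ exists and equals $n/q$ for some $n\in\mathbb{Z}$. (2) If the function $y\mapsto\rho_{y,\alpha}(\widehat g)$ is measurable, then there exists a $g$-invariant Borel probability measure $\mu$ on $X$ such that $\widehat{\mathrm{rot}}_{\mu,\alpha}(\widehat g)=n/q$ for some $n\in\mathbb{Z}$.
   Context: $X$ is a path-connected space, $a\in\mathrm{H}^1(X;\mathbb{Z})$, $\pi\colon\widehat X_a\to X$ a principal $\mathbb{Z}$-bundle with holonomy $a$, $T_r$ the action of $r\in\mathbb{Z}$. $\widehat G_a$ is the group of bundle automorphisms of $\widehat X_a$ (homeomorphisms $\widehat g$ with $\pi\circ\widehat g=g\circ\pi$ for a homeomorphism $g$ of $X$, said to cover $g$), and $G_a$ the group of homeomorphisms of $X$ preserving $a$. $\alpha$ is a real singular $1$-cocycle representing $a$, and $\theta\colon\widehat X_a\to\mathbb{R}$ a $0$-cochain with $d\theta=\pi^*\alpha$ and $\theta(T_r\widehat y)=\theta(\widehat y)+r$. For $y\in X$, $\rho_{y,\alpha}(\widehat g)=\theta(\widehat g(\widehat y))-\theta(\widehat y)$ with $\widehat y\in\pi^{-1}(y)$ (independent of choices); $\widehat{\mathrm{rot}}_{y,\alpha}(\widehat g)=\lim_{n\to\infty}\rho_{y,\alpha}(\widehat g^n)/n$ when it exists; for a $g$-invariant Borel probability measure $\mu$,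 $\widehat{\mathrm{rot}}_{\mu,\alpha}(\widehat g)=\int_X\rho_{y,\alpha}(\widehat g)\,d\mu(y)$. *)

theory Defs
  imports "HOL-Homology.Homology" "HOL-Probability.Probability"
begin

definition vtx :: "nat \<Rightarrow> nat \<Rightarrow> real" where
  "vtx i = (\<lambda>j. if j = i then 1 else 0)"

text \<open>Coboundary of a 0-cochain f (function on points = 0-simplices), evaluated on a
  singular 1-simplex s: f(s e1) - f(s e0).\<close>
definition cobdry0 :: "('a \<Rightarrow> 'r::ab_group_add) \<Rightarrow> ((nat \<Rightarrow> real) \<Rightarrow> 'a) \<Rightarrow> 'r" where
  "cobdry0 f s = f (s (vtx 1)) - f (s (vtx 0))"

definition cocycle1 :: "'a topology \<Rightarrow> (((nat \<Rightarrow> real) \<Rightarrow> 'a) \<Rightarrow> 'r::ab_group_add) \<Rightarrow> bool" where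
  "cocycle1 X c \<longleftrightarrow> (\<forall>t. singular_simplex 2 X t \<longrightarrow>
      c (singular_face 2 0 t) - c (singular_face 2 1 t) + c (singular_face 2 2 t) = 0)"

definition pullback1 :: "('b \<Rightarrow> 'a) \<Rightarrow> (((nat \<Rightarrow> real) \<Rightarrow> 'a) \<Rightarrow> 'r) \<Rightarrow> ((nat \<Rightarrow> real) \<Rightarrow> 'b) \<Rightarrow> 'r" where
  "pullback1 h c s = c (restrict (h \<circ> s) (standard_simplex 1))"

definition path_simplex :: "(real \<Rightarrow> 'a) \<Rightarrow> (nat \<Rightarrow> real) \<Rightarrow> 'a" where
  "path_simplex \<gamma> = restrict (\<lambda>x. \<gamma> (x 1)) (standard_simplex 1)"

definition principal_Z_bundle ::
  "'b topology \<Rightarrow> 'a topology \<Rightarrow> ('b \<Rightarrow> 'a) \<Rightarrow> (int \<Rightarrow> 'b \<Rightarrow> 'b) \<Rightarrow> bool" where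
  "principal_Z_bundle Xh X p T \<longleftrightarrow>
     continuous_map Xh X p \<and> p ` topspace Xh = topspace X \<and>
     (\<forall>r. homeomorphic_map Xh Xh (T r)) \<and>
     (\<forall>y\<in>topspace Xh. T 0 y = y \<and> (\<forall>r s. T (r + s) y = T r (T s y)) \<and> (\<forall>r. p (T r y) = p y)) \<and>
     (\<forall>x\<in>topspace X. \<exists>U \<phi>. openin X U \<and> x \<in> U \<and>
        homeomorphic_map (subtopology Xh {y\<in>topspace Xh. p y \<in> U})
           (prod_topology (subtopology X U) (discrete_topology (UNIV::int set))) \<phi> \<and>
        (\<forall>y\<in>topspace Xh. p y \<in> U \<longrightarrow> fst (\<phi> y) = p y \<and>
            (\<forall>r. \<phi> (T r y) = (fst (\<phi> y), snd (\<phi> y) + r))))"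

text \<open>The class a in H^1(X;Z), given by an integer cocycle acoc, is the holonomy of the
  bundle: every lift of a loop gamma ends at T (a(gamma)) of its start.\<close>
definition has_holonomy ::
  "'b topology \<Rightarrow> 'a topology \<Rightarrow> ('b \<Rightarrow> 'a) \<Rightarrow> (int \<Rightarrow> 'b \<Rightarrow> 'b) \<Rightarrow> (((nat \<Rightarrow> real) \<Rightarrow> 'a) \<Rightarrow> int) \<Rightarrow> bool" where
  "has_holonomy Xh X p T acoc \<longleftrightarrow>
     (\<forall>\<gamma> \<gamma>h. pathin X \<gamma> \<and> \<gamma> 0 = \<gamma> 1 \<and> pathin Xh \<gamma>h \<and> (\<forall>t\<in>{0..1}. p (\<gamma>h t) = \<gamma> t)
        \<longrightarrow> \<gamma>h 1 = T (acoc (path_simplex \<gamma>)) (\<gamma>h 0))"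

definition represents :: "'a topology \<Rightarrow> (((nat \<Rightarrow> real) \<Rightarrow> 'a) \<Rightarrow> real) \<Rightarrow> (((nat \<Rightarrow> real) \<Rightarrow> 'a) \<Rightarrow> int) \<Rightarrow> bool" where
  "represents X \<alpha> acoc \<longleftrightarrow> cocycle1 X \<alpha> \<and>
     (\<exists>f::'a \<Rightarrow> real. \<forall>s. singular_simplex 1 X s \<longrightarrow> \<alpha> s = real_of_int (acoc s) + cobdry0 f s)"

text \<open>g in G_a: homeomorphism of X with g^* a = a in H^1(X;Z).\<close>
definition preserves_class :: "'a topology \<Rightarrow> ('a \<Rightarrow> 'a) \<Rightarrow> (((nat \<Rightarrow> real) \<Rightarrow> 'a) \<Rightarrow> int) \<Rightarrow> bool" where
  "preserves_class X g acoc \<longleftrightarrow> homeomorphic_map X X g \<and>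
     (\<exists>h::'a \<Rightarrow> int. \<forall>s. singular_simplex 1 X s \<longrightarrow> pullback1 g acoc s = acoc s + cobdry0 h s)"

definition covers :: "'b topology \<Rightarrow> ('b \<Rightarrow> 'a) \<Rightarrow> (int \<Rightarrow> 'b \<Rightarrow> 'b) \<Rightarrow> ('b \<Rightarrow> 'b) \<Rightarrow> ('a \<Rightarrow> 'a) \<Rightarrow> bool" where
  "covers Xh p T gh g \<longleftrightarrow> homeomorphic_map Xh Xh gh \<and>
     (\<forall>y\<in>topspace Xh. p (gh y) = g (p y) \<and> (\<forall>r. gh (T r y) = T r (gh y)))"

text \<open>rho_{y,alpha}(gh) = theta(gh(yh)) - theta(yh), yh any point over y.\<close>
definition rho :: "'b topology \<Rightarrow> ('b \<Rightarrow> 'a) \<Rightarrow> ('b \<Rightarrow> real) \<Rightarrow> ('b \<Rightarrow> 'b) \<Rightarrow> 'a \<Rightarrow> real" where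
  "rho Xh p \<theta> gh y = (let yh = (SOME yh. yh \<in> topspace Xh \<and> p yh = y) in \<theta> (gh yh) - \<theta> yh)"

definition borel_of :: "'a topology \<Rightarrow> 'a measure" where
  "borel_of X = sigma (topspace X) {U. openin X U}"

end

theory Submission
  imports Defs
begin


lemma pzb_facts:
  assumes B: "principal_Z_bundle Xh X p T"
  shows "continuous_map Xh X p" "p ` topspace Xh = topspace X"
    "homeomorphic_map Xh Xh (T r)"
    "\<forall>y\<in>topspace Xh. T 0 y = y \<and> (\<forall>r s. T (r + s) y = T r (T s y)) \<and> (\<forall>r. p (T r y) = p y)"
  using B[unfolded principal_Z_bundle_def, THEN conjunct1]
    B[unfolded principal_Z_bundle_def, THEN conjunct2, THEN conjunct1]
    B[unfolded principal_Z_bundle_def, THEN conjunct2, THEN conjunct2, THEN conjunct1]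
    B[unfolded principal_Z_bundle_def, THEN conjunct2, THEN conjunct2, THEN conjunct2, THEN conjunct1]
  by auto

lemma fiber_lemma:
  assumes B: "principal_Z_bundle Xh X p T" and y: "y \<in> topspace Xh" "y' \<in> topspace Xh" and e: "p y = p y'"
  shows "\<exists>r. y' = T r y"
proof -
  have cm: "continuous_map Xh X p" using pzb_facts(1)[OF B] .
  have px: "p y \<in> topspace X" using pzb_facts(2)[OF B] y(1) by blast
  have loc: "\<forall>x\<in>topspace X. \<exists>U \<phi>. openin X U \<and> x \<in> U \<and>
        homeomorphic_map (subtopology Xh {y\<in>topspace Xh. p y \<in> U})
           (prod_topology (subtopology X U) (discrete_topology (UNIV::int set))) \<phi> \<and>
        (\<forall>y\<in>topspace Xh. p y \<in> U \<longrightarrow> fst (\<phi> y) = p y \<and>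
            (\<forall>r. \<phi> (T r y) = (fst (\<phi> y), snd (\<phi> y) + r)))"
    using B[unfolded principal_Z_bundle_def, THEN conjunct2, THEN conjunct2, THEN conjunct2, THEN conjunct2] .
  obtain U \<phi> where U: "openin X U" "p y \<in> U"
    and hm: "homeomorphic_map (subtopology Xh {z\<in>topspace Xh. p z \<in> U})
           (prod_topology (subtopology X U) (discrete_topology (UNIV::int set))) \<phi>"
    and ph: "\<forall>z\<in>topspace Xh. p z \<in> U \<longrightarrow> fst (\<phi> z) = p z \<and>
            (\<forall>r. \<phi> (T r z) = (fst (\<phi> z), snd (\<phi> z) + r))"
    using bspec[OF loc px] by (elim exE conjE) iprover
  define r where "r = snd (\<phi> y') - snd (\<phi> y)"
  have Tr: "homeomorphic_map Xh Xh (T r)" using pzb_facts(3)[OF B] .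
  have Tin: "T r y \<in> topspace Xh" using Tr y
    by (metis homeomorphic_imp_surjective_map image_eqI)
  have pT: "p (T r y) = p y" using bspec[OF pzb_facts(4)[OF B] y(1)] by simp
  have inj: "inj_on \<phi> {z\<in>topspace Xh. p z \<in> U}"
  proof -
    have "topspace Xh \<inter> {z \<in> topspace Xh. p z \<in> U} = {z \<in> topspace Xh. p z \<in> U}" by auto
    then show ?thesis using homeomorphic_imp_injective_map[OF hm] by simp
  qed
  have a1: "\<phi> (T r y) = (p y, snd (\<phi> y) + r)" using ph y U by auto
  have a2: "\<phi> y' = (p y, snd (\<phi> y'))" using ph y U e by (metis prod.collapse)
  have "\<phi> (T r y) = \<phi> y'" using a1 a2 unfolding r_def by simp
  then have "T r y = y'" using inj Tin y pT U e unfolding inj_on_def by auto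
  then show ?thesis by metis
qed

lemma card_shift:
  fixes P :: "nat \<Rightarrow> bool"
  assumes "P q = P 0"
  shows "card {i. i < q \<and> P (Suc i)} = card {i. i < q \<and> P i}"
proof (cases q)
  case 0 then show ?thesis by simp
next
  case (Suc n)
  define f where "f i = (if P i then 1 else 0 :: nat)" for i
  have c: "card {i. i < m \<and> Q i} = (\<Sum>i<m. if Q i then 1 else 0 :: nat)" for m :: nat and Q :: "nat \<Rightarrow> bool"
  proof -
    have "{i. i < m \<and> Q i} = {i\<in>{..<m}. Q i}" by auto
    moreover have "card {i\<in>{..<m}. Q i} = (\<Sum>i\<in>{i\<in>{..<m}. Q i}. 1)" by (rule card_eq_sum)
    moreover have "(\<Sum>i\<in>{i\<in>{..<m}. Q i}. 1::nat) = (\<Sum>i<m. if Q i then 1 else 0 :: nat)"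
      using sum.inter_filter[OF finite_lessThan, where g="\<lambda>_. 1::nat" and P=Q] by simp
    ultimately show ?thesis by simp
  qed
  have "f 0 + (\<Sum>i<Suc n. f (Suc i)) = (\<Sum>i<Suc (Suc n). f i)"
    by (rule sum.lessThan_Suc_shift[symmetric])
  also have "\<dots> = (\<Sum>i<Suc n. f i) + f (Suc n)" by simp
  finally have "(\<Sum>i<Suc n. f (Suc i)) = (\<Sum>i<Suc n. f i)"
    using assms Suc unfolding f_def by simp
  then show ?thesis using Suc unfolding c f_def by simp
qed


lemma rho_lift:
  assumes B: "principal_Z_bundle Xh X p T"
    and C: "covers Xh p T gh g"
    and th: "\<forall>y\<in>topspace Xh. \<forall>r. \<theta> (T r y) = \<theta> y + real_of_int r"
    and yh: "yh \<in> topspace Xh"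
  shows "rho Xh p \<theta> gh (p yh) = \<theta> (gh yh) - \<theta> yh"
proof -
  define y0 where "y0 = (SOME z. z \<in> topspace Xh \<and> p z = p yh)"
  have y0: "y0 \<in> topspace Xh \<and> p y0 = p yh"
    unfolding y0_def by (rule someI[of _ yh]) (simp add: yh)
  then obtain r where r: "yh = T r y0" using fiber_lemma[OF B, of y0 yh] yh by auto
  have hm: "homeomorphic_map Xh Xh gh" and cov: "\<forall>y\<in>topspace Xh. p (gh y) = g (p y) \<and> (\<forall>r. gh (T r y) = T r (gh y))"
    using C unfolding covers_def by auto
  have gy0: "gh y0 \<in> topspace Xh" using hm y0
    by (metis homeomorphic_imp_surjective_map image_eqI)
  have "gh yh = T r (gh y0)" using cov y0 r by auto
  then have "\<theta> (gh yh) - \<theta> yh = \<theta> (gh y0) - \<theta> y0"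
    using th gy0 y0 r by auto
  then show ?thesis unfolding rho_def Let_def y0_def[symmetric] by simp
qed

theorem proposition2p9:
  fixes X :: "'a topology" and Xh :: "'b topology"
    and p :: "'b \<Rightarrow> 'a" and T :: "int \<Rightarrow> 'b \<Rightarrow> 'b"
    and acoc :: "((nat \<Rightarrow> real) \<Rightarrow> 'a) \<Rightarrow> int"
    and \<alpha> :: "((nat \<Rightarrow> real) \<Rightarrow> 'a) \<Rightarrow> real"
    and \<theta> :: "'b \<Rightarrow> real"
    and g :: "'a \<Rightarrow> 'a" and gh :: "'b \<Rightarrow> 'b"
    and x :: 'a and q :: nat
  assumes "path_connected_space X"
    and "cocycle1 X acoc"
    and "principal_Z_bundle Xh X p T"
    and "has_holonomy Xh X p T acoc"
    and "represents X \<alpha> acoc"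
    and "\<forall>s. singular_simplex 1 Xh s \<longrightarrow> cobdry0 \<theta> s = pullback1 p \<alpha> s"
    and "\<forall>y\<in>topspace Xh. \<forall>r. \<theta> (T r y) = \<theta> y + real_of_int r"
    and "preserves_class X g acoc"
    and "covers Xh p T gh g"
    and "x \<in> topspace X" and "q > 0" and "(g ^^ q) x = x"
  shows "(\<exists>n::int. (\<lambda>m. rho Xh p \<theta> (gh ^^ m) x / real m) \<longlonglongrightarrow> real_of_int n / real q)
     \<and> ((\<lambda>y. rho Xh p \<theta> gh y) \<in> borel_measurable (borel_of X) \<longrightarrow>
        (\<exists>\<mu>. prob_space \<mu> \<and> sets \<mu> = sets (borel_of X) \<and> space \<mu> = topspace X \<and>
             (\<forall>A\<in>sets \<mu>. emeasure \<mu> {y\<in>topspace X. g y \<in> A} = emeasure \<mu> A) \<and>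
             integrable \<mu> (\<lambda>y. rho Xh p \<theta> gh y) \<and>
             (\<exists>n::int. (\<integral>y. rho Xh p \<theta> gh y \<partial>\<mu>) = real_of_int n / real q)))"
proof -
  note B = assms(3) and th = assms(7) and C = assms(9) and xX = assms(10) and q0 = assms(11)
    and per = assms(12)
  have hg: "homeomorphic_map X X g" using assms(8) unfolding preserves_class_def by blast
  have hm: "homeomorphic_map Xh Xh gh" and cov: "\<forall>y\<in>topspace Xh. p (gh y) = g (p y) \<and> (\<forall>r. gh (T r y) = T r (gh y))"
    using C unfolding covers_def by auto
  have gh_in: "gh y \<in> topspace Xh" if "y \<in> topspace Xh" for y
    using hm that by (metis homeomorphic_imp_surjective_map image_eqI)
  have g_in: "g y \<in> topspace X" if "y \<in> topspace X" for y
    using hg that by (metis homeomorphic_imp_surjective_map image_eqI)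
  have T_in: "T r y \<in> topspace Xh" if "y \<in> topspace Xh" for y r
    using pzb_facts(3)[OF B, of r] that by (metis homeomorphic_imp_surjective_map image_eqI)
  have Tadd: "T r (T s y) = T (r + s) y" if "y \<in> topspace Xh" for y r s
    using bspec[OF pzb_facts(4)[OF B] that] by simp
  have ghn_in: "(gh ^^ n) y \<in> topspace Xh" if "y \<in> topspace Xh" for y n
    using that by (induction n) (auto intro: gh_in)
  have gn_in: "(g ^^ n) y \<in> topspace X" if "y \<in> topspace X" for y n
    using that by (induction n) (auto intro: g_in)
  have ghn_p: "p ((gh ^^ n) y) = (g ^^ n) (p y)" if "y \<in> topspace Xh" for y n
    using that by (induction n) (auto simp: cov ghn_in)
  have ghn_T: "(gh ^^ n) (T r y) = T r ((gh ^^ n) y)" if "y \<in> topspace Xh" for y n r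
    using that by (induction n) (auto simp: cov ghn_in)
  define x0 where "x0 = (SOME z. z \<in> topspace Xh \<and> p z = x)"
  have "\<exists>z. z \<in> topspace Xh \<and> p z = x" using pzb_facts(2)[OF B] xX by (metis imageE)
  then have x0: "x0 \<in> topspace Xh" "p x0 = x" unfolding x0_def by (metis (mono_tags, lifting) someI)+
  have "p ((gh ^^ q) x0) = p x0" using ghn_p[OF x0(1)] x0 per by simp
  then obtain k where k: "(gh ^^ q) x0 = T k x0"
    using fiber_lemma[OF B x0(1) ghn_in[OF x0(1)]] by metis
  have mult: "(gh ^^ (q * j)) x0 = T (int j * k) x0" for j
  proof (induction j)
    case 0 then show ?case using bspec[OF pzb_facts(4)[OF B] x0(1)] by simp
  next
    case (Suc j)
    have "(gh ^^ (q * Suc j)) x0 = (gh ^^ (q * j)) ((gh ^^ q) x0)"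
    proof -
      have "q * Suc j = q * j + q" by simp
      then show ?thesis by (simp only: funpow_add comp_apply)
    qed
    also have "\<dots> = (gh ^^ (q * j)) (T k x0)" using k by simp
    also have "\<dots> = T k (T (int j * k) x0)" using ghn_T[OF x0(1)] Suc by simp
    also have "\<dots> = T (int (Suc j) * k) x0" using Tadd[OF x0(1)] by (simp add: algebra_simps)
    finally show ?case .
  qed
  have thq: "\<theta> ((gh ^^ m) x0) = \<theta> ((gh ^^ (m mod q)) x0) + real_of_int (int (m div q) * k)" for m
  proof -
    have "(gh ^^ m) x0 = (gh ^^ (m mod q)) ((gh ^^ (q * (m div q))) x0)"
    proof -
      have "m = m mod q + q * (m div q)" by simp
      then show ?thesis by (metis comp_apply funpow_add)
    qed
    also have "\<dots> = T (int (m div q) * k) ((gh ^^ (m mod q)) x0)" using mult ghn_T[OF x0(1)] by simp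
    finally show ?thesis using th ghn_in[OF x0(1)] by simp
  qed
  have rho_m: "rho Xh p \<theta> (gh ^^ m) x = \<theta> ((gh ^^ m) x0) - \<theta> x0" for m
    unfolding rho_def Let_def x0_def by simp
  define c where "c r = \<theta> ((gh ^^ r) x0) - \<theta> x0 - real r * real_of_int k / real q" for r
  have rho_c: "rho Xh p \<theta> (gh ^^ m) x = real m * real_of_int k / real q + c (m mod q)" for m
  proof -
    have "real m = real (m mod q) + real q * real (m div q)"
    proof -
      have e: "m mod q + q * (m div q) = m" by simp
      have "real (m mod q + q * (m div q)) = real (m mod q) + real q * real (m div q)"
        by (simp only: of_nat_add of_nat_mult)
      then show ?thesis by (simp only: e)
    qed
    then have "real_of_int (int (m div q) * k) = (real m - real (m mod q)) * real_of_int k / real q"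
      using q0 by (simp add: field_simps)
    then show ?thesis unfolding rho_m c_def using thq[of m] q0 by (simp add: field_simps)
  qed
  define Bd where "Bd = Max ((\<lambda>r. \<bar>c r\<bar>) ` {..<q})"
  have Bd: "\<bar>c (m mod q)\<bar> \<le> Bd" for m
    unfolding Bd_def using q0 by (intro Max_ge) auto
  have lim0: "(\<lambda>m. c (m mod q) / real m) \<longlonglongrightarrow> 0"
  proof (rule Lim_null_comparison)
    show "\<forall>\<^sub>F m in sequentially. norm (c (m mod q) / real m) \<le> Bd / real m"
      using Bd by (auto simp: divide_right_mono)
    show "(\<lambda>m. Bd / real m) \<longlonglongrightarrow> 0" by (rule lim_const_over_n)
  qed
  have "(\<lambda>m. real_of_int k / real q + c (m mod q) / real m) \<longlonglongrightarrow> real_of_int k / real q + 0"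
    by (intro tendsto_add tendsto_const lim0)
  moreover have "\<forall>\<^sub>F m in sequentially. real_of_int k / real q + c (m mod q) / real m = rho Xh p \<theta> (gh ^^ m) x / real m"
    using eventually_ge_at_top[of 1] by eventually_elim (simp add: rho_c field_simps)
  ultimately have part1: "(\<lambda>m. rho Xh p \<theta> (gh ^^ m) x / real m) \<longlonglongrightarrow> real_of_int k / real q"
    using tendsto_cong[THEN iffD1] by (simp only: add_0_right)
  have part2: "\<exists>\<mu>. prob_space \<mu> \<and> sets \<mu> = sets (borel_of X) \<and> space \<mu> = topspace X \<and>
             (\<forall>A\<in>sets \<mu>. emeasure \<mu> {y\<in>topspace X. g y \<in> A} = emeasure \<mu> A) \<and>
             integrable \<mu> (\<lambda>y. rho Xh p \<theta> gh y) \<and>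
             (\<exists>n::int. (\<integral>y. rho Xh p \<theta> gh y \<partial>\<mu>) = real_of_int n / real q)"
    if meas: "(\<lambda>y. rho Xh p \<theta> gh y) \<in> borel_measurable (borel_of X)"
  proof -
    define M0 where "M0 = uniform_count_measure {..<q}"
    define \<mu> where "\<mu> = distr M0 (borel_of X) (\<lambda>i. (g ^^ i) x)"
    have sub: "{U. openin X U} \<subseteq> Pow (topspace X)" using openin_subset by auto
    have sp: "space (borel_of X) = topspace X" unfolding borel_of_def using space_measure_of[OF sub] .
    have st: "sets (borel_of X) = sigma_sets (topspace X) {U. openin X U}"
      unfolding borel_of_def using sets_measure_of[OF sub] .
    have orb: "(\<lambda>i. (g ^^ i) x) \<in> measurable M0 (borel_of X)"
      unfolding M0_def measurable_cong_sets[OF sets_uniform_count_measure_count_space refl]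
      using gn_in[OF xX] sp by auto
    have P0: "prob_space M0" unfolding M0_def using q0 by (intro prob_space_uniform_count_measure) auto
    have P: "prob_space \<mu>" unfolding \<mu>_def by (rule prob_space.prob_space_distr[OF P0 orb])
    have sets_mu: "sets \<mu> = sets (borel_of X)" unfolding \<mu>_def by simp
    have space_mu: "space \<mu> = topspace X" unfolding \<mu>_def using sp by simp
    have gmeas: "g \<in> measurable (borel_of X) (borel_of X)"
      unfolding borel_of_def
    proof (rule measurable_measure_of[OF sub])
      show "g \<in> space (sigma (topspace X) {U. openin X U}) \<rightarrow> topspace X"
        using space_measure_of[OF sub] g_in by auto
      fix U assume "U \<in> {U. openin X U}"
      then have "openin X {y \<in> topspace X. g y \<in> U}"
        using openin_continuous_map_preimage[OF homeomorphic_imp_continuous_map[OF hg]] by auto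
      moreover have "g -` U \<inter> space (sigma (topspace X) {U. openin X U}) = {y \<in> topspace X. g y \<in> U}"
        using space_measure_of[OF sub] by auto
      ultimately show "g -` U \<inter> space (sigma (topspace X) {U. openin X U}) \<in> sets (sigma (topspace X) {U. openin X U})"
        using sub by auto
    qed
    have em: "emeasure \<mu> S = real (card {i. i < q \<and> (g ^^ i) x \<in> S}) / real q" if "S \<in> sets (borel_of X)" for S
    proof -
      have "emeasure \<mu> S = emeasure M0 ((\<lambda>i. (g ^^ i) x) -` S \<inter> space M0)"
        unfolding \<mu>_def by (rule emeasure_distr[OF orb that])
      also have "(\<lambda>i. (g ^^ i) x) -` S \<inter> space M0 = {i. i < q \<and> (g ^^ i) x \<in> S}"
        unfolding M0_def space_uniform_count_measure by auto
      also have "emeasure M0 {i. i < q \<and> (g ^^ i) x \<in> S} = real (card {i. i < q \<and> (g ^^ i) x \<in> S}) / real q"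
        unfolding M0_def by (subst emeasure_uniform_count_measure) (auto simp: ennreal_of_nat_eq_real_of_nat divide_ennreal)
      finally show ?thesis .
    qed
    have inv: "emeasure \<mu> {y\<in>topspace X. g y \<in> A} = emeasure \<mu> A" if A: "A \<in> sets \<mu>" for A
    proof -
      have A': "A \<in> sets (borel_of X)" using A sets_mu by simp
      have pre: "{y\<in>topspace X. g y \<in> A} = g -` A \<inter> space (borel_of X)" using sp by auto
      have S: "{y\<in>topspace X. g y \<in> A} \<in> sets (borel_of X)"
        unfolding pre using gmeas A' by (rule measurable_sets)
      have "{i. i < q \<and> (g ^^ i) x \<in> {y\<in>topspace X. g y \<in> A}} = {i. i < q \<and> (g ^^ Suc i) x \<in> A}"
        using gn_in[OF xX] by auto
      moreover have "card {i. i < q \<and> (g ^^ Suc i) x \<in> A} = card {i. i < q \<and> (g ^^ i) x \<in> A}"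
        by (rule card_shift[where P = "\<lambda>i. (g ^^ i) x \<in> A"]) (simp add: per)
      ultimately show ?thesis using em[OF S] em[OF A'] by simp
    qed
    have integ: "integrable \<mu> (\<lambda>y. rho Xh p \<theta> gh y)"
      unfolding \<mu>_def
      by (subst integrable_distr_eq[OF orb meas]) (simp add: M0_def uniform_count_measure_def integrable_point_measure_finite)
    have rg: "rho Xh p \<theta> gh ((g ^^ i) x) = \<theta> ((gh ^^ Suc i) x0) - \<theta> ((gh ^^ i) x0)" for i
      using rho_lift[OF B C th ghn_in[OF x0(1), of i]] ghn_p[OF x0(1), of i] x0 by simp
    have "(\<integral>y. rho Xh p \<theta> gh y \<partial>\<mu>) = (\<integral>i. rho Xh p \<theta> gh ((g ^^ i) x) \<partial>M0)"
      unfolding \<mu>_def by (rule integral_distr[OF orb meas])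
    also have "\<dots> = (\<Sum>i<q. rho Xh p \<theta> gh ((g ^^ i) x)) / real q"
      unfolding M0_def by (subst integral_uniform_count_measure) auto
    also have "(\<Sum>i<q. rho Xh p \<theta> gh ((g ^^ i) x)) = \<theta> ((gh ^^ q) x0) - \<theta> x0"
      unfolding rg by (subst sum_lessThan_telescope[where f = "\<lambda>i. \<theta> ((gh ^^ i) x0)"]) simp
    also have "\<dots> = real_of_int k" using k th x0 by simp
    finally have "(\<integral>y. rho Xh p \<theta> gh y \<partial>\<mu>) = real_of_int k / real q" .
    then show ?thesis using P sets_mu space_mu inv integ by blast
  qed
  show ?thesis using part1 part2 by blast
qed

end
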